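(* A finite transitive permutation group $G$ whose point stabilizers have order $2$ has the EKR property if (i) $G$ has a cyclic Sylow $2$-subgroup, or (ii) $G$ is a nilpotent group.
   Context: For a permutation group $G$ on a finite set $V$, a subset $\mathcal{F}\subseteq G$ is intersecting if for all $g,h\in\mathcal{F}$ there is $v\in V$ with $g(v)=h(v)$. $G$ has the Erdős–Ko–Rado (EKR) property if the maximum size of an intersecting set of $G$ equals the maximum order of a point stabilizer $G_v$, $v\in V$. *)

theory Defs
  imports "HOL-Algebra.Algebra" "HOL-Computational_Algebra.Primes"
begin

definition perm_group :: "'a set \<Rightarrow> ('a \<Rightarrow> 'a) set \<Rightarrow> bool" where
  "perm_group V G \<longleftrightarrow> finite V \<and> subgroup G (BijGroup V)"

definition pgroup :: "'a set \<Rightarrow> ('a \<Rightarrow> 'a) set \<Rightarrow> ('a \<Rightarrow> 'a) monoid" where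
  "pgroup V G = subgroup_generated (BijGroup V) G"

definition point_stab :: "('a \<Rightarrow> 'a) set \<Rightarrow> 'a \<Rightarrow> ('a \<Rightarrow> 'a) set" where
  "point_stab G v = {g \<in> G. g v = v}"

definition transitive_on :: "'a set \<Rightarrow> ('a \<Rightarrow> 'a) set \<Rightarrow> bool" where
  "transitive_on V G \<longleftrightarrow> (\<forall>u\<in>V. \<forall>w\<in>V. \<exists>g\<in>G. g u = w)"

definition intersecting :: "'a set \<Rightarrow> ('a \<Rightarrow> 'a) set \<Rightarrow> ('a \<Rightarrow> 'a) set \<Rightarrow> bool" where
  "intersecting V G F \<longleftrightarrow> F \<subseteq> G \<and> (\<forall>g\<in>F. \<forall>h\<in>F. \<exists>v\<in>V. g v = h v)"

definition EKR :: "'a set \<Rightarrow> ('a \<Rightarrow> 'a) set \<Rightarrow> bool" where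
  "EKR V G \<longleftrightarrow>
     Max {card F | F. intersecting V G F} = Max {card (point_stab G v) | v. v \<in> V}"

definition sylow_subgroup :: "nat \<Rightarrow> ('g, 'b) monoid_scheme \<Rightarrow> 'g set \<Rightarrow> bool" where
  "sylow_subgroup p H P \<longleftrightarrow>
     subgroup P H \<and> card P = p ^ multiplicity p (order H)"

fun lower_central :: "('g, 'b) monoid_scheme \<Rightarrow> nat \<Rightarrow> 'g set" where
  "lower_central H 0 = carrier H"
| "lower_central H (Suc n) =
     generate H {a \<otimes>\<^bsub>H\<^esub> b \<otimes>\<^bsub>H\<^esub> inv\<^bsub>H\<^esub> a \<otimes>\<^bsub>H\<^esub> inv\<^bsub>H\<^esub> b
                 | a b. a \<in> lower_central H n \<and> b \<in> carrier H}"

definition nilpotent_group :: "('g, 'b) monoid_scheme \<Rightarrow> bool" where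
  "nilpotent_group H \<longleftrightarrow> (\<exists>n. lower_central H n = {\<one>\<^bsub>H\<^esub>})"

end

theory Submission
  imports Defs
begin

lemma pgroup_basic:
  assumes "perm_group V G"
  shows "group (pgroup V G)" "carrier (pgroup V G) = G" "G \<subseteq> Bij V"
    "\<And>x y. x \<in> G \<Longrightarrow> y \<in> G \<Longrightarrow> x \<otimes>\<^bsub>pgroup V G\<^esub> y = compose V x y"
    "\<one>\<^bsub>pgroup V G\<^esub> = (\<lambda>x\<in>V. x)"
proof -
  have sg: "subgroup G (BijGroup V)" using assms by (simp add: perm_group_def)
  show "group (pgroup V G)" unfolding pgroup_def
    by (simp add: group.group_subgroup_generated group_BijGroup)
  show "carrier (pgroup V G) = G" unfolding pgroup_def
    using sg by (simp add: subgroup.carrier_subgroup_generated_subgroup)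
  show GB: "G \<subseteq> Bij V" using subgroup.subset[OF sg] by (simp add: BijGroup_def)
  show "\<And>x y. x \<in> G \<Longrightarrow> y \<in> G \<Longrightarrow> x \<otimes>\<^bsub>pgroup V G\<^esub> y = compose V x y"
    using GB by (auto simp: pgroup_def subgroup_generated_def BijGroup_def)
  show "\<one>\<^bsub>pgroup V G\<^esub> = (\<lambda>x\<in>V. x)"
    by (simp add: pgroup_def subgroup_generated_def BijGroup_def)
qed

lemma inv_parity:
  fixes f :: "'b \<Rightarrow> 'b"
  assumes "finite A" "\<forall>z\<in>A. f z \<in> A" "\<forall>z\<in>A. f (f z) = z"
  shows "even (card A) = even (card {z\<in>A. f z = z})"
  using assms
proof (induction "card A" arbitrary: A rule: less_induct)
  case less
  show ?case
  proof (cases "\<exists>z\<in>A. f z \<noteq> z")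
    case False
    then have "{z\<in>A. f z = z} = A" by auto
    then show ?thesis by simp
  next
    case True
    then obtain z where z: "z \<in> A" "f z \<noteq> z" by auto
    define Y where "Y = A - {z, f z}"
    have fz: "f z \<in> A" using less z by auto
    have c2: "card {z, f z} = 2" using z by simp
    have cX: "card Y = card A - 2" unfolding Y_def
      using card_Diff_subset[of "{z, f z}" A] less(2) z fz c2 by auto
    have ge: "card A \<ge> 2" using card_mono[of A "{z, f z}"] less(2) z fz c2 by auto
    have fin: "finite Y" using less(2) by (simp add: Y_def)
    have cl: "\<forall>w\<in>Y. f w \<in> Y"
    proof
      fix w assume w: "w \<in> Y"
      then have wX: "w \<in> A" "w \<noteq> z" "w \<noteq> f z" by (auto simp: Y_def)
      have "f w \<in> A" using less wX by auto
      moreover have "f w \<noteq> z"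
      proof
        assume "f w = z"
        then have "f (f w) = f z" by simp
        then show False using less(4) wX by simp
      qed
      moreover have "f w \<noteq> f z"
      proof
        assume "f w = f z"
        then have "f (f w) = f (f z)" by simp
        then show False using less(4) wX z by simp
      qed
      ultimately show "f w \<in> Y" by (simp add: Y_def)
    qed
    have inv': "\<forall>w\<in>Y. f (f w) = w" using less by (auto simp: Y_def)
    have "card Y < card A" using cX ge by simp
    then have IH: "even (card Y) = even (card {w\<in>Y. f w = w})"
      using less(1)[OF _ fin cl inv'] by simp
    have "{w\<in>Y. f w = w} = {w\<in>A. f w = w}"
      using z less fz by (auto simp: Y_def)
    moreover have "even (card A) = even (card Y)" using cX ge by auto
    ultimately show ?thesis using IH by simp
  qed
qed

lemma int_dvd_aux:
  fixes m i j :: int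
  assumes "m dvd 2*i" "\<not> m dvd i" "m dvd 2*j" "\<not> m dvd j"
  shows "m dvd i + j"
proof -
  obtain k where k: "2*i = m*k" using assms(1) by (auto simp: dvd_def)
  obtain l where l: "2*j = m*l" using assms(3) by (auto simp: dvd_def)
  have "odd k"
  proof
    assume "even k"
    then obtain k' where "k = 2*k'" by auto
    then have "i = m*k'" using k by simp
    then show False using assms(2) by simp
  qed
  moreover have "odd l"
  proof
    assume "even l"
    then obtain l' where "l = 2*l'" by auto
    then have "j = m*l'" using l by simp
    then show False using assms(4) by simp
  qed
  ultimately have "even (k + l)" by simp
  then obtain t where t: "k + l = 2*t" by (rule evenE)
  have "2*(i+j) = m*(k+l)" using k l by (simp add: algebra_simps)
  then have "i + j = m*t" using t by simp
  then show ?thesis by simp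
qed

lemma (in group) cyclic_two_inv:
  assumes "cyclic_group G" "u \<in> carrier G" "w \<in> carrier G"
    "u \<otimes> u = \<one>" "w \<otimes> w = \<one>" "u \<noteq> \<one>" "w \<noteq> \<one>"
  shows "u \<otimes> w = \<one>"
proof -
  obtain c where c: "c \<in> carrier G" "carrier G = range (\<lambda>n::int. c [^] n)"
    using assms(1) unfolding cyclic_group by blast
  have "u \<in> range (\<lambda>n::int. c [^] n)" using assms(2) unfolding c(2) .
  then obtain i :: int where i: "u = c [^] i" by blast
  have "w \<in> range (\<lambda>n::int. c [^] n)" using assms(3) unfolding c(2) .
  then obtain j :: int where j: "w = c [^] j" by blast
  have e: "\<And>k::int. (c [^] k = \<one>) = (int (ord c) dvd k)" by (rule int_pow_eq_id[OF c(1)])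
  have "c [^] (i + i) = u \<otimes> u" unfolding i by (rule int_pow_mult[OF c(1)])
  then have "c [^] (i + i) = \<one>" using assms(4) by (rule trans)
  then have a1: "int (ord c) dvd 2*i" unfolding e mult_2 .
  have a2: "\<not> int (ord c) dvd i" using assms(6) unfolding i e .
  have "c [^] (j + j) = w \<otimes> w" unfolding j by (rule int_pow_mult[OF c(1)])
  then have "c [^] (j + j) = \<one>" using assms(5) by (rule trans)
  then have a3: "int (ord c) dvd 2*j" unfolding e mult_2 .
  have a4: "\<not> int (ord c) dvd j" using assms(7) unfolding j e .
  have "int (ord c) dvd i + j" using int_dvd_aux[OF a1 a2 a3 a4] .
  then have "c [^] (i + j) = \<one>" unfolding e .
  moreover have "c [^] (i + j) = u \<otimes> w" unfolding i j by (rule int_pow_mult[OF c(1)])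
  ultimately show ?thesis by simp
qed

lemma (in group) cancel1: "x \<in> carrier G \<Longrightarrow> z \<in> carrier G \<Longrightarrow> x \<otimes> (inv x \<otimes> z) = z"
  by (simp add: m_assoc[symmetric])

lemma (in group) cancel2: "x \<in> carrier G \<Longrightarrow> z \<in> carrier G \<Longrightarrow> inv x \<otimes> (x \<otimes> z) = z"
  by (simp add: m_assoc[symmetric])

lemma (in group) conj_mult:
  assumes "a \<in> carrier G" "z1 \<in> carrier G" "z2 \<in> carrier G"
  shows "(a \<otimes> z1 \<otimes> inv a) \<otimes> (a \<otimes> z2 \<otimes> inv a) = a \<otimes> (z1 \<otimes> z2) \<otimes> inv a"
  using assms by (simp add: m_assoc cancel2)

lemma (in group) conj_one:
  assumes "a \<in> carrier G" "z \<in> carrier G" "a \<otimes> z \<otimes> inv a = \<one>"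
  shows "z = \<one>"
proof -
  have "a \<otimes> z = a \<otimes> \<one>"
    using assms by (metis inv_closed l_one m_closed m_assoc r_inv r_one inv_solve_right)
  then show ?thesis using assms by simp
qed

locale ekr = group G for G :: "('a \<Rightarrow> 'a) monoid" (structure) +
  fixes V :: "'a set" and Gs :: "('a \<Rightarrow> 'a) set"
  assumes H_eq: "G = pgroup V Gs" and pg: "perm_group V Gs"
    and trans: "transitive_on V Gs"
    and stab2: "\<forall>v\<in>V. card (point_stab Gs v) = 2"
begin

lemma carr: "carrier G = Gs"
  using pgroup_basic(2)[OF pg] H_eq by simp

lemma in_V: "x \<in> Gs \<Longrightarrow> v \<in> V \<Longrightarrow> x v \<in> V"
  using pgroup_basic(3)[OF pg] Bij_imp_funcset by blast

lemma mult_eval: "x \<in> Gs \<Longrightarrow> y \<in> Gs \<Longrightarrow> v \<in> V \<Longrightarrow> (x \<otimes> y) v = x (y v)"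
  using pgroup_basic(4)[OF pg] H_eq by (simp add: compose_def)

lemma one_eval: "v \<in> V \<Longrightarrow> \<one> v = v"
  using pgroup_basic(5)[OF pg] H_eq by simp

lemma inv_eval: "x \<in> Gs \<Longrightarrow> v \<in> V \<Longrightarrow> (inv x) (x v) = v"
proof -
  assume a: "x \<in> Gs" "v \<in> V"
  have "(inv x \<otimes> x) v = v" using a by (simp add: carr[symmetric] one_eval)
  moreover have "inv x \<in> Gs" using a carr by auto
  ultimately show ?thesis using a mult_eval[of "inv x" x v] by simp
qed

lemma inv_eval2: "x \<in> Gs \<Longrightarrow> v \<in> V \<Longrightarrow> x ((inv x) v) = v"
proof -
  assume a: "x \<in> Gs" "v \<in> V"
  have "(x \<otimes> inv x) v = v" using a by (simp add: carr[symmetric] one_eval)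
  moreover have "inv x \<in> Gs" using a carr by auto
  ultimately show ?thesis using a mult_eval[of x "inv x" v] by simp
qed

definition T where "T = {x \<in> Gs. x \<noteq> \<one> \<and> (\<exists>v\<in>V. x v = v)}"

lemma stab_eq:
  assumes "v \<in> V" "x \<in> Gs" "x v = v" "x \<noteq> \<one>"
  shows "point_stab Gs v = {\<one>, x}"
proof -
  have c: "card (point_stab Gs v) = 2" using stab2 assms by simp
  then have f: "finite (point_stab Gs v)" by (metis card.infinite zero_neq_numeral)
  have sub: "{\<one>, x} \<subseteq> point_stab Gs v"
    using assms carr one_eval by (auto simp: point_stab_def)
  have "card {\<one>, x} = 2" using assms by simp
  then show ?thesis using card_subset_eq[OF f sub] c by simp
qed

lemma sq: assumes "x \<in> T" shows "x \<otimes> x = \<one>"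
proof -
  obtain v where v: "v \<in> V" "x \<in> Gs" "x v = v" "x \<noteq> \<one>" using assms by (auto simp: T_def)
  have "x \<otimes> x \<in> point_stab Gs v"
    using v carr mult_eval by (auto simp: point_stab_def)
  then have "x \<otimes> x = \<one> \<or> x \<otimes> x = x" using stab_eq[OF v] by auto
  then show ?thesis using v carr by (metis r_one m_closed l_cancel one_closed)
qed

lemma conj: assumes "x \<in> T" "y \<in> T" shows "\<exists>g\<in>Gs. y = g \<otimes> x \<otimes> inv g"
proof -
  obtain v where v: "v \<in> V" "x \<in> Gs" "x v = v" "x \<noteq> \<one>" using assms by (auto simp: T_def)
  obtain w where w: "w \<in> V" "y \<in> Gs" "y w = w" "y \<noteq> \<one>" using assms by (auto simp: T_def)
  obtain g where g: "g \<in> Gs" "g v = w" using trans v w by (auto simp: transitive_on_def)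
  define z where "z = g \<otimes> x \<otimes> inv g"
  have zG: "z \<in> Gs" using g v carr z_def by auto
  have "(inv g) w = v" using inv_eval g v by auto
  then have zw: "z w = w" using g v w carr z_def mult_eval by auto
  have "z \<noteq> \<one>"
  proof
    assume "z = \<one>"
    then have "x = inv g \<otimes> \<one> \<otimes> g" using g v carr z_def
      by (metis inv_closed l_inv m_assoc m_closed r_one l_one r_inv)
    moreover have "g \<in> carrier G" using g carr by simp
    ultimately show False using v by simp
  qed
  then have "point_stab Gs w = {\<one>, z}" using stab_eq[OF w(1) zG zw] by simp
  moreover have "y \<in> point_stab Gs w" using w by (simp add: point_stab_def)
  ultimately have "y = z" using w by auto
  then show ?thesis using g z_def by blast
qed


lemma config_comm:
  assumes "x \<in> T" "y \<in> T" "x \<otimes> y \<in> T"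
  shows "x \<otimes> y = y \<otimes> x"
proof -
  have c: "x \<in> carrier G" "y \<in> carrier G" using assms carr by (auto simp: T_def)
  have "inv x = x" using sq[OF assms(1)] c by (simp add: inv_equality)
  moreover have "inv y = y" using sq[OF assms(2)] c by (simp add: inv_equality)
  moreover have "inv (x \<otimes> y) = x \<otimes> y" using sq[OF assms(3)] c by (simp add: inv_equality)
  ultimately show ?thesis using c inv_mult_group[of x y] by simp
qed

lemma config_rot:
  assumes "x \<in> T" "y \<in> T" "x \<otimes> y \<in> T"
  shows "(x \<otimes> y) \<otimes> x = y"
proof -
  have c: "x \<in> carrier G" "y \<in> carrier G" using assms carr by (auto simp: T_def)
  have "(x \<otimes> y) \<otimes> x = y \<otimes> (x \<otimes> x)" using config_comm[OF assms] c by (simp add: m_assoc)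
  then show ?thesis using sq[OF assms(1)] c by simp
qed

lemma config_lc:
  "\<forall>x y. x \<in> T \<longrightarrow> y \<in> T \<longrightarrow> x \<otimes> y \<in> T \<longrightarrow> x \<in> lower_central G n"
proof (induction n)
  case 0
  then show ?case using carr by (auto simp: T_def)
next
  case (Suc n)
  show ?case
  proof (intro allI impI)
    fix x y assume xy: "x \<in> T" "y \<in> T" "x \<otimes> y \<in> T"
    have c: "x \<in> carrier G" "y \<in> carrier G" using xy carr by (auto simp: T_def)
    define c where "c = x \<otimes> y"
    have cT: "c \<in> T" using xy c_def by simp
    have cx: "c \<otimes> x = y" using config_rot[OF xy] c_def by simp
    have "c \<otimes> x \<in> T" using cx xy(2) by simp
    then have "c \<in> lower_central G n" using Suc.IH cT xy(1) by blast
    obtain g where g: "g \<in> Gs" "y = g \<otimes> c \<otimes> inv g" using conj[OF cT xy(2)] by blast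
    have gc: "g \<in> carrier G" using g carr by simp
    have cc: "c \<in> carrier G" using c c_def by simp
    have ic: "inv c = c" using sq[OF cT] cc by (simp add: inv_equality)
    have "c \<otimes> g \<otimes> inv c \<otimes> inv g = c \<otimes> y" using g gc cc ic by (simp add: m_assoc)
    also have "\<dots> = x" using c c_def sq[OF xy(2)] by (simp add: m_assoc)
    finally have "x = c \<otimes> g \<otimes> inv c \<otimes> inv g" by simp
    then show "x \<in> lower_central G (Suc n)"
      using \<open>c \<in> lower_central G n\<close> gc by (auto intro!: generate.incl)
  qed
qed

lemma intersecting_config:
  assumes "intersecting V Gs F" "2 < card F"
  shows "\<exists>x y. x \<in> T \<and> y \<in> T \<and> x \<otimes> y \<in> T"
proof -
  have "Suc 2 \<le> card F" using assms by simp
  then obtain f1 B1 where b1: "F = insert f1 B1" "f1 \<notin> B1" "2 \<le> card B1"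
    unfolding card_le_Suc_iff by blast
  then have "Suc 1 \<le> card B1" by simp
  then obtain f2 B2 where b2: "B1 = insert f2 B2" "f2 \<notin> B2" "1 \<le> card B2"
    unfolding card_le_Suc_iff by blast
  then have "Suc 0 \<le> card B2" by simp
  then obtain f3 B3 where b3: "B2 = insert f3 B3"
    unfolding card_le_Suc_iff by blast
  have in3: "f1 \<in> F" "f2 \<in> F" "f3 \<in> F" using b1 b2 b3 by auto
  have d: "f1 \<noteq> f2" "f1 \<noteq> f3" "f2 \<noteq> f3" using b1 b2 b3 by auto
  have G3: "f1 \<in> Gs" "f2 \<in> Gs" "f3 \<in> Gs" using in3 assms(1) by (auto simp: intersecting_def)
  have key: "inv a \<otimes> b \<in> T" if ab: "a \<in> F" "b \<in> F" "a \<noteq> b" for a b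
  proof -
    have abG: "a \<in> Gs" "b \<in> Gs" using ab assms(1) by (auto simp: intersecting_def)
    obtain v where v: "v \<in> V" "a v = b v" using assms(1) ab unfolding intersecting_def by blast
    have ia: "inv a \<in> Gs" using abG carr by auto
    have "(inv a \<otimes> b) v = (inv a) (a v)" using mult_eval[OF ia abG(2) v(1)] v(2) by simp
    then have "(inv a \<otimes> b) v = v" using inv_eval[OF abG(1) v(1)] by simp
    moreover have "inv a \<otimes> b \<noteq> \<one>"
    proof
      assume "inv a \<otimes> b = \<one>"
      moreover have "b = a \<otimes> (inv a \<otimes> b)"
      proof -
        have abc: "a \<in> carrier G" "b \<in> carrier G" using abG carr by auto
        then show ?thesis by (simp add: m_assoc[symmetric])
      qed
      ultimately have "b = a" using abG carr by simp
      then show False using ab by simp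
    qed
    moreover have "inv a \<otimes> b \<in> Gs" using ia abG carr by (metis m_closed)
    ultimately show ?thesis using v by (auto simp: T_def)
  qed
  have "(inv f1 \<otimes> f2) \<otimes> (inv f2 \<otimes> f3) = inv f1 \<otimes> f3"
  proof -
    have "f1 \<in> carrier G" "f2 \<in> carrier G" "f3 \<in> carrier G" using G3 carr by auto
    then show ?thesis by (simp add: m_assoc cancel1)
  qed
  moreover have "inv f1 \<otimes> f2 \<in> T" "inv f2 \<otimes> f3 \<in> T" "inv f1 \<otimes> f3 \<in> T"
    using key in3 d by auto
  ultimately show ?thesis
    by (intro exI[of _ "inv f1 \<otimes> f2"] exI[of _ "inv f2 \<otimes> f3"]) simp
qed


lemma finite_Gs: "finite Gs"
proof -
  have fV: "finite V" using pg by (simp add: perm_group_def)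
  have "Bij V \<subseteq> PiE V (\<lambda>_. V)"
    by (auto simp: Bij_def bij_betw_def PiE_def Pi_def)
  then have "finite (Bij V)" using finite_PiE[of V "\<lambda>_. V"] fV by (meson finite_subset)
  then show ?thesis using pgroup_basic(3)[OF pg] finite_subset by blast
qed

lemma no_config_cyclic:
  assumes syl: "sylow_subgroup 2 G P" and cyc: "cyclic_group (subgroup_generated G P)"
    and xy: "x \<in> T" "y \<in> T" "x \<otimes> y \<in> T"
  shows False
proof -
  have sub: "subgroup P G" and cP: "card P = 2 ^ multiplicity 2 (order G)"
    using syl by (auto simp: sylow_subgroup_def)
  have xc: "x \<in> carrier G" "y \<in> carrier G" using xy carr by (auto simp: T_def)
  have Psub: "P \<subseteq> carrier G" using sub subgroup.subset by blast
  have finG: "finite (carrier G)" using finite_Gs carr by simp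
  define R where "R = rcosets P"
  have ordpos: "order G \<noteq> 0" using finG one_closed by (auto simp: order_def)
  obtain q where q: "order G = 2 ^ multiplicity 2 (order G) * q" "\<not> 2 dvd q"
    using multiplicity_decompose'[of "order G" "2::nat"] ordpos by auto
  have lag: "card R * card P = order G" unfolding R_def using lagrange[OF sub] .
  have "2 ^ multiplicity 2 (order G) * card R = 2 ^ multiplicity 2 (order G) * q"
    using lag q(1) cP by (simp add: mult.commute)
  then have "card R = q" by simp
  then have oddR: "odd (card R)" using q(2) by simp
  have finR: "finite R" unfolding R_def RCOSETS_def using finG by simp
  have Rform: "\<And>S. S \<in> R \<Longrightarrow> \<exists>a\<in>carrier G. S = P #> a"
    unfolding R_def RCOSETS_def by blast
  have Rsub: "\<And>S. S \<in> R \<Longrightarrow> S \<subseteq> carrier G"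
    using Rform r_coset_subset_G[OF Psub] by blast
  have act: "\<And>S u w. S \<in> R \<Longrightarrow> u \<in> carrier G \<Longrightarrow> w \<in> carrier G \<Longrightarrow> S #> u #> w = S #> (u \<otimes> w)"
    using Rsub coset_mult_assoc by blast
  have actR: "\<And>S u. S \<in> R \<Longrightarrow> u \<in> carrier G \<Longrightarrow> S #> u \<in> R"
  proof -
    fix S u assume a: "S \<in> R" "u \<in> carrier G"
    obtain b where b: "b \<in> carrier G" "S = P #> b" using Rform[OF a(1)] by blast
    have "S #> u = P #> (b \<otimes> u)" using b a coset_mult_assoc[OF Psub] by simp
    then show "S #> u \<in> R" unfolding R_def using rcosetsI[OF Psub] b a by simp
  qed
  have invol: "\<And>S u. S \<in> R \<Longrightarrow> u \<in> T \<Longrightarrow> S #> u #> u = S"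
  proof -
    fix S u assume a: "S \<in> R" "u \<in> T"
    have uc: "u \<in> carrier G" using a carr by (auto simp: T_def)
    have "S #> u #> u = S #> (u \<otimes> u)" using act[OF a(1) uc uc] .
    then show "S #> u #> u = S" using sq[OF a(2)] Rsub[OF a(1)] by simp
  qed
  define Fx where "Fx = {S \<in> R. S #> x = S}"
  have "even (card R) = even (card Fx)" unfolding Fx_def
    by (rule inv_parity[OF finR]) (use actR xc invol xy in auto)
  then have oddFx: "odd (card Fx)" using oddR by simp
  have finFx: "finite Fx" using finR by (simp add: Fx_def)
  have comm: "x \<otimes> y = y \<otimes> x" using config_comm[OF xy] .
  have FxC: "\<forall>S\<in>Fx. S #> y \<in> Fx"
  proof
    fix S assume S: "S \<in> Fx"
    then have SR: "S \<in> R" and Sx: "S #> x = S" by (auto simp: Fx_def)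
    have "S #> y #> x = S #> (y \<otimes> x)" using act[OF SR xc(2) xc(1)] .
    also have "\<dots> = S #> x #> y" using act[OF SR xc(1) xc(2)] comm by simp
    also have "\<dots> = S #> y" using Sx by simp
    finally show "S #> y \<in> Fx" using actR[OF SR xc(2)] by (simp add: Fx_def)
  qed
  have "even (card Fx) = even (card {S \<in> Fx. S #> y = S})"
    by (rule inv_parity[OF finFx FxC]) (use invol xy in \<open>auto simp: Fx_def\<close>)
  then have "odd (card {S \<in> Fx. S #> y = S})" using oddFx by simp
  then have "card {S \<in> Fx. S #> y = S} \<noteq> 0" by (metis dvd_0_right)
  then have "{S \<in> Fx. S #> y = S} \<noteq> {}" by (metis card.empty)
  then obtain S where "S \<in> {S \<in> Fx. S #> y = S}" by blast
  then have S: "S \<in> R" "S #> x = S" "S #> y = S" by (auto simp: Fx_def)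
  obtain a where a: "a \<in> carrier G" "S = P #> a" using Rform[OF S(1)] by blast
  have inP: "a \<otimes> u \<otimes> inv a \<in> P" if u: "u \<in> carrier G" "S #> u = S" for u
  proof -
    have "a \<otimes> u \<in> P #> (a \<otimes> u)" using rcos_self[OF _ sub] a u by simp
    also have "P #> (a \<otimes> u) = S #> u" using a u coset_mult_assoc[OF Psub] by simp
    finally have "a \<otimes> u \<in> P #> a" using u a by simp
    then show ?thesis using subgroup.rcos_module_imp[OF sub is_group] a u by simp
  qed
  define K where "K = subgroup_generated G P"
  have gK: "group K" unfolding K_def by simp
  have cK: "carrier K = P" unfolding K_def using subgroup.carrier_subgroup_generated_subgroup[OF sub] .
  have mK: "\<And>p r. p \<otimes>\<^bsub>K\<^esub> r = p \<otimes> r" by (simp add: K_def subgroup_generated_def)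
  have oK: "\<one>\<^bsub>K\<^esub> = \<one>" by (simp add: K_def subgroup_generated_def)
  define u where "u = a \<otimes> x \<otimes> inv a"
  define w where "w = a \<otimes> y \<otimes> inv a"
  have uP: "u \<in> P" using inP[OF xc(1) S(2)] u_def by simp
  have wP: "w \<in> P" using inP[OF xc(2) S(3)] w_def by simp
  have xyc: "x \<otimes> y \<in> carrier G" using xc by simp
  have uu: "u \<otimes> u = \<one>" using conj_mult[OF a(1) xc(1) xc(1)] sq[OF xy(1)] a(1) u_def by simp
  have ww: "w \<otimes> w = \<one>" using conj_mult[OF a(1) xc(2) xc(2)] sq[OF xy(2)] a(1) w_def by simp
  have nx: "x \<noteq> \<one>" "y \<noteq> \<one>" "x \<otimes> y \<noteq> \<one>" using xy by (auto simp: T_def)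
  have u1: "u \<noteq> \<one>" unfolding u_def using conj_one[OF a(1) xc(1)] nx by blast
  have w1: "w \<noteq> \<one>" unfolding w_def using conj_one[OF a(1) xc(2)] nx by blast
  have uw: "u \<otimes> w \<noteq> \<one>"
    using conj_mult[OF a(1) xc(1) xc(2)] conj_one[OF a(1) xyc] nx u_def w_def by metis
  have "u \<otimes>\<^bsub>K\<^esub> w = \<one>\<^bsub>K\<^esub>"
    using group.cyclic_two_inv[OF gK cyc[folded K_def]] uP wP uu ww u1 w1
    unfolding cK mK oK by blast
  then show False using uw unfolding mK oK by simp
qed

end


theorem proposition3p2:
  fixes V :: "'a set" and G :: "('a \<Rightarrow> 'a) set"
  assumes "perm_group V G"
    and "V \<noteq> {}"
    and "transitive_on V G"
    and "\<forall>v\<in>V. card (point_stab G v) = 2"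
    and "(\<exists>P. sylow_subgroup 2 (pgroup V G) P
              \<and> cyclic_group (subgroup_generated (pgroup V G) P))
         \<or> nilpotent_group (pgroup V G)"
  shows "EKR V G"
proof -
  have ek: "ekr (pgroup V G) V G"
    unfolding ekr_def ekr_axioms_def using assms pgroup_basic(1)[OF assms(1)] by auto
  interpret E: ekr "pgroup V G" V G by (rule ek)
  have noconf: "\<not> (\<exists>x y. x \<in> E.T \<and> y \<in> E.T \<and> x \<otimes>\<^bsub>pgroup V G\<^esub> y \<in> E.T)"
  proof
    assume "\<exists>x y. x \<in> E.T \<and> y \<in> E.T \<and> x \<otimes>\<^bsub>pgroup V G\<^esub> y \<in> E.T"
    then obtain x y where xy: "x \<in> E.T" "y \<in> E.T" "x \<otimes>\<^bsub>pgroup V G\<^esub> y \<in> E.T" by blast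
    from assms(5) show False
    proof
      assume "\<exists>P. sylow_subgroup 2 (pgroup V G) P
              \<and> cyclic_group (subgroup_generated (pgroup V G) P)"
      then obtain P where "sylow_subgroup 2 (pgroup V G) P"
        "cyclic_group (subgroup_generated (pgroup V G) P)" by blast
      then show False using E.no_config_cyclic xy by blast
    next
      assume "nilpotent_group (pgroup V G)"
      then obtain n where n: "lower_central (pgroup V G) n = {\<one>\<^bsub>pgroup V G\<^esub>}"
        by (auto simp: nilpotent_group_def)
      have "x \<in> lower_central (pgroup V G) n" using E.config_lc xy by blast
      then have "x = \<one>\<^bsub>pgroup V G\<^esub>" using n by simp
      then show False using xy(1) by (simp add: E.T_def)
    qed
  qed
  have bound: "card F \<le> 2" if "intersecting V G F" for F
    using E.intersecting_config[OF that] noconf by force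
  obtain v0 where v0: "v0 \<in> V" using assms(2) by blast
  have int0: "intersecting V G (point_stab G v0)"
    using v0 unfolding intersecting_def point_stab_def by (metis (mono_tags, lifting) mem_Collect_eq subsetI)
  have c0: "card (point_stab G v0) = 2" using assms(4) v0 by simp
  have s2: "{card (point_stab G v) | v. v \<in> V} = {2}"
  proof
    show "{card (point_stab G v) | v. v \<in> V} \<subseteq> {2}" using assms(4) by auto
    show "{2} \<subseteq> {card (point_stab G v) | v. v \<in> V}" using c0 v0 by force
  qed
  have fin: "finite {card F | F. intersecting V G F}"
    by (rule finite_subset[of _ "{..2}"]) (auto dest: bound)
  have "Max {card F | F. intersecting V G F} = 2"
    by (rule Max_eqI[OF fin]) (use bound int0 c0 in force)+
  then show ?thesis unfolding EKR_def s2 by simp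
qed

end
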